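(* Let $d=2^n$, let $|z\rangle\in\mathbb{C}^d$ be a unit vector, let $\mathcal{M}_{C,z}$ be the Clifford POVM generated by $|z\rangle$, and let $W$ be any Pauli operator with $W\neq\mathbb{I}$. Then $$\|\mathcal{M}_{C,z}(W)\|_{\ell_1}=\frac{\|\Xi(|z\rangle\langle z|)\|_{\ell_1}-1}{(d+1)(d-1)}\,\|W\|_1.$$
   Context: $d=2^n$. The Pauli operators $W_1=\mathbb{I},\dots,W_{d^2}$ are all $n$-fold tensor products of $\sigma_0=\mathbb{I},\sigma_1,\sigma_2,\sigma_3$ (single-qubit Pauli matrices); the Pauli group is $\{\pm W_k,\pm iW_k\}$. The Clifford group $\mathrm{C}_n$ is the group of unitaries normalizing the Pauli group. For a unit vector $|z\rangle$, let $\{|x_k\rangle\langle x_k|\}_{k=1}^N$ be the distinct projectors in the orbit $\{U|z\rangle\langle z|U^\dagger:U\in\mathrm{C}_n\}$; $\mathcal{M}_{C,z}$ has POVM elements $\frac dN|x_k\rangle\langle x_k|$ and $\mathcal{M}_{C,z}(X)=(\mathrm{tr}(\frac dN|x_k\rangle\langle x_k|X))_{k=1}^N$. The characteristic function of a Hermitian $\rho$ is $\Xi(\rho)=(\mathrm{tr}(W_k\rho))_{k=1}^{d^2}\in\mathbb{R}^{d^2}$. $\|\cdot\|_{\ell_1}$ is the vector $\ell_1$-norm, $\|\cdot\|_1$ the trace norm. *)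

theory Defs
  imports "Jordan_Normal_Form.Char_Poly"
begin

definition adj :: "complex mat \<Rightarrow> complex mat" where
  "adj A = mat (dim_col A) (dim_row A) (\<lambda>(i,j). cnj (A $$ (j,i)))"

definition mtrace :: "complex mat \<Rightarrow> complex" where
  "mtrace A = (\<Sum>i<dim_row A. A $$ (i,i))"

text \<open>Trace norm: sum of the singular values (with multiplicity), i.e. of the square roots
  of the eigenvalues of A^dagger A, counted with algebraic multiplicity.\<close>
definition trace_norm :: "complex mat \<Rightarrow> real" where
  "trace_norm A = (let p = char_poly (adj A * A) in
     (\<Sum>a\<in>{a. poly p a = 0}. real (order a p) * sqrt (Re a)))"

text \<open>Single-qubit Pauli matrices sigma_0 = I, sigma_1, sigma_2, sigma_3 (entries r,c in {0,1}).\<close>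
definition sigma :: "nat \<Rightarrow> nat \<Rightarrow> nat \<Rightarrow> complex" where
  "sigma a r c =
    (if a = 0 then (if r = c then 1 else 0)
     else if a = 1 then (if r \<noteq> c then 1 else 0)
     else if a = 2 then (if r = c then 0 else if r = 0 then - \<i> else \<i>)
     else (if r \<noteq> c then 0 else if r = 0 then 1 else -1))"

definition bit :: "nat \<Rightarrow> nat \<Rightarrow> nat" where
  "bit k i = (i div 2 ^ k) mod 2"

definition pauli_idx :: "nat \<Rightarrow> nat list set" where
  "pauli_idx n = {a. length a = n \<and> set a \<subseteq> {0..<4}}"

text \<open>The n-fold tensor product sigma_{a_0} (x) ... (x) sigma_{a_(n-1)}, qubit k being bit k of the index.\<close>
definition pauli :: "nat \<Rightarrow> nat list \<Rightarrow> complex mat" where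
  "pauli n a = mat (2^n) (2^n) (\<lambda>(i,j). \<Prod>k<n. sigma (a ! k) (bit k i) (bit k j))"

definition pauli_ops :: "nat \<Rightarrow> complex mat set" where
  "pauli_ops n = pauli n ` pauli_idx n"

definition pauli_group :: "nat \<Rightarrow> complex mat set" where
  "pauli_group n = {c \<cdot>\<^sub>m W | c W. c \<in> {1, -1, \<i>, -\<i>} \<and> W \<in> pauli_ops n}"

definition clifford :: "nat \<Rightarrow> complex mat set" where
  "clifford n = {U. U \<in> carrier_mat (2^n) (2^n) \<and> U * adj U = 1\<^sub>m (2^n) \<and> adj U * U = 1\<^sub>m (2^n)
      \<and> (\<forall>P\<in>pauli_group n. U * P * adj U \<in> pauli_group n)
      \<and> (\<forall>P\<in>pauli_group n. adj U * P * U \<in> pauli_group n)}"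

definition proj :: "complex vec \<Rightarrow> complex mat" where
  "proj z = mat (dim_vec z) (dim_vec z) (\<lambda>(i,j). z $ i * cnj (z $ j))"

definition clifford_orbit :: "nat \<Rightarrow> complex vec \<Rightarrow> complex mat set" where
  "clifford_orbit n z = {U * proj z * adj U | U. U \<in> clifford n}"

text \<open>l1-norm of M_{C,z}(X) = (tr((d/N)|x_k><x_k| X))_k, over the distinct orbit projectors.\<close>
definition povm_l1 :: "nat \<Rightarrow> complex vec \<Rightarrow> complex mat \<Rightarrow> real" where
  "povm_l1 n z X = (let N = card (clifford_orbit n z) in
     (\<Sum>P\<in>clifford_orbit n z. cmod (mtrace ((of_real (2^n / real N) \<cdot>\<^sub>m P) * X))))"

text \<open>l1-norm of the characteristic function Xi(rho) = (tr(W_k rho))_k.\<close>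
definition char_l1 :: "nat \<Rightarrow> complex mat \<Rightarrow> real" where
  "char_l1 n \<rho> = (\<Sum>a\<in>pauli_idx n. cmod (mtrace (pauli n a * \<rho>)))"

end

theory Submission
  imports Defs "HOL-Library.FuncSet"
begin


lemma sum_lessThan_add_nat: "(\<Sum>i<a+b. f i) = (\<Sum>i<a. f i) + (\<Sum>i<b. f (a+i::nat))"
  by (induction b) (auto simp: add_ac)

lemma bit_low: "k < n \<Longrightarrow> i < 2^n \<Longrightarrow> bit k (2^n + i) = bit k i"
proof -
  assume k: "k < n" and i: "i < 2^n"
  have "(2::nat)^n = 2^k * 2^(n-k)" using k by (simp add: power_add[symmetric])
  hence "(2^n + i) div 2^k = 2^(n-k) + i div 2^k" by simp
  moreover obtain m where "(2::nat)^(n-k) = 2*m" using k by (metis evenE even_power even_numeral zero_less_diff)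
  ultimately show ?thesis unfolding bit_def by simp
qed

lemma bit_top0: "i < 2^n \<Longrightarrow> bit n i = 0"
  unfolding bit_def by simp

lemma bit_top1: "i < 2^n \<Longrightarrow> bit n (2^n + i) = 1"
  unfolding bit_def by simp

lemma bit_lt2: "bit k i < 2" unfolding bit_def by simp

lemma sum_bits_prod:
  fixes g :: "nat \<Rightarrow> nat \<Rightarrow> 'a::comm_semiring_1"
  shows "(\<Sum>i<2^n. \<Prod>k<n. g k (bit k i)) = (\<Prod>k<n. \<Sum>t<2. g k t)"
proof (induction n)
  case 0 then show ?case by simp
next
  case (Suc n)
  have "(\<Sum>i<2^(Suc n). \<Prod>k<Suc n. g k (bit k i))
      = (\<Sum>i<2^n. \<Prod>k<Suc n. g k (bit k i)) + (\<Sum>i<2^n. \<Prod>k<Suc n. g k (bit k (2^n+i)))"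
    using sum_lessThan_add_nat[where a="2^n" and b="2^n"] by (simp add: mult_2)
  also have "(\<Sum>i<2^n. \<Prod>k<Suc n. g k (bit k i)) = (\<Sum>i<2^n. \<Prod>k<n. g k (bit k i)) * g n 0"
    by (simp add: sum_distrib_right bit_top0)
  also have "(\<Sum>i<2^n. \<Prod>k<Suc n. g k (bit k (2^n+i))) = (\<Sum>i<2^n. \<Prod>k<n. g k (bit k i)) * g n 1"
    by (auto simp: sum_distrib_right bit_top1 bit_low intro!: sum.cong prod.cong)
  finally show ?case using Suc by (simp add: distrib_left numeral_2_eq_2)
qed

lemma bits_eq: "i < 2^n \<Longrightarrow> j < 2^n \<Longrightarrow> (\<forall>k<n. bit k i = bit k j) \<Longrightarrow> i = j"
proof (induction n arbitrary: i j)
  case 0 then show ?case by simp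
next
  case (Suc n)
  have "i div 2 = j div 2"
  proof (rule Suc.IH)
    show "i div 2 < 2^n" "j div 2 < 2^n" using Suc.prems by auto
    show "\<forall>k<n. bit k (i div 2) = bit k (j div 2)"
    proof (intro allI impI)
      fix k assume "k < n"
      then have "bit (Suc k) i = bit (Suc k) j" using Suc.prems by auto
      then show "bit k (i div 2) = bit k (j div 2)" unfolding bit_def by (simp add: div_mult2_eq)
    qed
  qed
  moreover have "i mod 2 = j mod 2" using Suc.prems(3) unfolding bit_def by (metis div_by_1 power_0 zero_less_Suc)
  ultimately show ?case by (metis div_mult_mod_eq)
qed


lemma adj_carrier[simp]: "dim_row (adj A) = dim_col A" "dim_col (adj A) = dim_row A"
  unfolding adj_def by auto
lemma adj_carrier_mat[simp]: "A \<in> carrier_mat m n \<Longrightarrow> adj A \<in> carrier_mat n m"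
  unfolding adj_def by auto
lemma adj_index[simp]: "i < dim_col A \<Longrightarrow> j < dim_row A \<Longrightarrow> adj A $$ (i,j) = cnj (A $$ (j,i))"
  unfolding adj_def by auto
lemma adj_adj[simp]: "adj (adj A) = A"
  by (rule eq_matI) auto
lemma adj_mult: "A \<in> carrier_mat m k \<Longrightarrow> B \<in> carrier_mat k l \<Longrightarrow> adj (A * B) = adj B * adj A"
  by (rule eq_matI) (auto simp: scalar_prod_def mult.commute intro!: sum.cong)
lemma adj_one[simp]: "adj (1\<^sub>m n) = 1\<^sub>m n"
  by (rule eq_matI) auto
lemma adj_smult: "adj (c \<cdot>\<^sub>m A) = cnj c \<cdot>\<^sub>m adj A"
  by (rule eq_matI) auto
lemma adj_add: "A \<in> carrier_mat m k \<Longrightarrow> B \<in> carrier_mat m k \<Longrightarrow> adj (A + B) = adj A + adj B"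
  by (rule eq_matI) auto

lemma mtrace_comm: "A \<in> carrier_mat m k \<Longrightarrow> B \<in> carrier_mat k m \<Longrightarrow> mtrace (A * B) = mtrace (B * A)"
  unfolding mtrace_def apply (simp add: scalar_prod_def atLeast0LessThan)
  by (subst sum.swap) (simp add: mult.commute)
lemma mtrace_smult: "A \<in> carrier_mat m m \<Longrightarrow> mtrace (c \<cdot>\<^sub>m A) = c * mtrace A"
  unfolding mtrace_def by (auto simp: sum_distrib_left)
lemma mtrace_add: "A \<in> carrier_mat m m \<Longrightarrow> B \<in> carrier_mat m m \<Longrightarrow> mtrace (A + B) = mtrace A + mtrace B"
  unfolding mtrace_def by (auto simp: sum.distrib)

definition tens :: "nat \<Rightarrow> (nat \<Rightarrow> nat \<Rightarrow> nat \<Rightarrow> complex) \<Rightarrow> complex mat" where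
  "tens n f = mat (2^n) (2^n) (\<lambda>(i,j). \<Prod>k<n. f k (bit k i) (bit k j))"

lemma tens_carrier[simp]: "tens n f \<in> carrier_mat (2^n) (2^n)"
  "dim_row (tens n f) = 2^n" "dim_col (tens n f) = 2^n"
  unfolding tens_def by auto

lemma tens_index: "i < 2^n \<Longrightarrow> j < 2^n \<Longrightarrow> tens n f $$ (i,j) = (\<Prod>k<n. f k (bit k i) (bit k j))"
  unfolding tens_def by auto

lemma pauli_tens: "pauli n a = tens n (\<lambda>k. sigma (a!k))"
  unfolding pauli_def tens_def by simp

lemma tens_mult: "tens n f * tens n g = tens n (\<lambda>k r c. \<Sum>t<2. f k r t * g k t c)"
proof (rule eq_matI)
  fix i j assume i: "i < dim_row (tens n (\<lambda>k r c. \<Sum>t<2. f k r t * g k t c))"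
    and j: "j < dim_col (tens n (\<lambda>k r c. \<Sum>t<2. f k r t * g k t c))"
  then have i: "i < 2^n" and j: "j < 2^n" by auto
  have "(tens n f * tens n g) $$ (i,j) = (\<Sum>l<2^n. (\<Prod>k<n. f k (bit k i) (bit k l)) * (\<Prod>k<n. g k (bit k l) (bit k j)))"
    using i j by (auto simp: scalar_prod_def tens_index atLeast0LessThan intro!: sum.cong)
  also have "\<dots> = (\<Sum>l<2^n. \<Prod>k<n. f k (bit k i) (bit k l) * g k (bit k l) (bit k j))"
    by (simp add: prod.distrib)
  also have "\<dots> = (\<Prod>k<n. \<Sum>t<2. f k (bit k i) t * g k t (bit k j))"
    by (rule sum_bits_prod)
  finally show "(tens n f * tens n g) $$ (i,j) = tens n (\<lambda>k r c. \<Sum>t<2. f k r t * g k t c) $$ (i,j)"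
    using i j by (simp add: tens_index)
qed auto

lemma tens_trace: "mtrace (tens n f) = (\<Prod>k<n. \<Sum>t<2. f k t t)"
proof -
  have "mtrace (tens n f) = (\<Sum>i<2^n. \<Prod>k<n. f k (bit k i) (bit k i))"
    unfolding mtrace_def by (auto simp: tens_index)
  also have "\<dots> = (\<Prod>k<n. \<Sum>t<2. f k t t)" by (rule sum_bits_prod)
  finally show ?thesis .
qed

lemma tens_adj: "adj (tens n f) = tens n (\<lambda>k r c. cnj (f k c r))"
  by (rule eq_matI) (auto simp: tens_index)

lemma tens_cong: "(\<And>k r c. k < n \<Longrightarrow> r < 2 \<Longrightarrow> c < 2 \<Longrightarrow> f k r c = g k r c) \<Longrightarrow> tens n f = tens n g"
  unfolding tens_def by (auto intro!: cong_mat prod.cong simp: bit_lt2)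

lemma tens_scal: "tens n (\<lambda>k r c. h k * f k r c) = (\<Prod>k<n. h k) \<cdot>\<^sub>m tens n f"
  by (rule eq_matI) (auto simp: tens_index prod.distrib)

lemma tens_one: "tens n (\<lambda>k r c. if r = c then 1 else 0) = 1\<^sub>m (2^n)"
proof (rule eq_matI)
  fix i j assume "i < dim_row (1\<^sub>m (2^n) :: complex mat)" "j < dim_col (1\<^sub>m (2^n) :: complex mat)"
  then have i: "i < 2^n" and j: "j < 2^n" by auto
  show "tens n (\<lambda>k r c. if r = c then 1 else 0) $$ (i, j) = 1\<^sub>m (2 ^ n) $$ (i, j)"
  proof (cases "i = j")
    case True then show ?thesis using i by (simp add: tens_index)
  next
    case False
    then obtain k where k: "k < n" "bit k i \<noteq> bit k j" using bits_eq[OF i j] by blast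
    then show ?thesis using i j False by (auto simp: tens_index prod_zero_iff)
  qed
qed auto

lemma pauli_idx_Suc: "pauli_idx (Suc n) = (\<lambda>(a,t). a @ [t]) ` (pauli_idx n \<times> {..<4})"
proof
  show "pauli_idx (Suc n) \<subseteq> (\<lambda>(a,t). a @ [t]) ` (pauli_idx n \<times> {..<4})"
  proof
    fix b assume b: "b \<in> pauli_idx (Suc n)"
    have ne: "b \<noteq> []" using b unfolding pauli_idx_def by auto
    have e: "b = butlast b @ [last b]" using ne by simp
    have s: "set b \<subseteq> {0..<4}" "length b = Suc n" using b unfolding pauli_idx_def by auto
    have "butlast b \<in> pauli_idx n" unfolding pauli_idx_def
      using s in_set_butlastD[of _ b] by auto
    moreover have "last b \<in> set b" using ne by simp
    hence "last b < 4" using s by auto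
    ultimately show "b \<in> (\<lambda>(a,t). a @ [t]) ` (pauli_idx n \<times> {..<4})"
      using e by (intro image_eqI[where x="(butlast b, last b)"]) auto
  qed
qed (auto simp: pauli_idx_def)

lemma finite_pauli_idx: "finite (pauli_idx n)"
  unfolding pauli_idx_def using finite_lists_length_eq[of "{0..<4::nat}" n] by (simp add: conj_commute)

lemma pauli_idx_0: "pauli_idx 0 = {[]}" unfolding pauli_idx_def by auto

lemma sum_pauli_idx_prod:
  fixes g :: "nat \<Rightarrow> nat \<Rightarrow> 'a::comm_semiring_1"
  shows "(\<Sum>a\<in>pauli_idx n. \<Prod>k<n. g k (a!k)) = (\<Prod>k<n. \<Sum>t<4. g k t)"
proof (induction n)
  case 0 then show ?case by (simp add: pauli_idx_0)
next
  case (Suc n)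
  have inj: "inj_on (\<lambda>(a,t). a @ [t]) (pauli_idx n \<times> {..<4})" by (auto simp: inj_on_def)
  have "(\<Sum>a\<in>pauli_idx (Suc n). \<Prod>k<Suc n. g k (a!k))
      = (\<Sum>(a,t)\<in>pauli_idx n \<times> {..<4}. \<Prod>k<Suc n. g k ((a@[t])!k))"
    unfolding pauli_idx_Suc by (subst sum.reindex[OF inj]) (simp add: case_prod_unfold)
  also have "\<dots> = (\<Sum>(a,t)\<in>pauli_idx n \<times> {..<4}. (\<Prod>k<n. g k (a!k)) * g n t)"
    by (rule sum.cong) (auto simp: pauli_idx_def nth_append intro!: prod.cong)
  also have "\<dots> = (\<Sum>a\<in>pauli_idx n. \<Prod>k<n. g k (a!k)) * (\<Sum>t<4. g n t)"
    by (simp add: sum.cartesian_product[symmetric] sum_product)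
  finally show ?case using Suc by simp
qed


lemma lt4: "(x::nat) < 4 \<Longrightarrow> x = 0 \<or> x = 1 \<or> x = 2 \<or> x = 3" by auto
lemma lt2: "(x::nat) < 2 \<Longrightarrow> x = 0 \<or> x = 1" by auto

definition phases :: "complex set" where "phases = {1, -1, \<i>, -\<i>}"

lemma phases_mult: "x \<in> phases \<Longrightarrow> y \<in> phases \<Longrightarrow> x * y \<in> phases"
  unfolding phases_def by auto
lemma phases_cmod: "x \<in> phases \<Longrightarrow> cmod x = 1"
  unfolding phases_def by auto
lemma phases_prod: "(\<And>k. k < (n::nat) \<Longrightarrow> f k \<in> phases) \<Longrightarrow> (\<Prod>k<n. f k :: complex) \<in> phases"
  proof (induction n)
  case 0 then show ?case by (simp add: phases_def)
next
  case (Suc n) then show ?case by (simp add: phases_mult)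
qed
lemma phases_finite: "finite phases" unfolding phases_def by auto
lemma phases_cnj: "x \<in> phases \<Longrightarrow> cnj x * x = 1"
  unfolding phases_def by auto

definition qm :: "nat \<Rightarrow> nat \<Rightarrow> nat" where
  "qm x y = (if x = 0 then y else if y = 0 then x else if x = y then 0 else 6 - x - y)"
definition qph :: "nat \<Rightarrow> nat \<Rightarrow> complex" where
  "qph x y = (if x = 0 \<or> y = 0 \<or> x = y then 1 else
     if (x = 1 \<and> y = 2) \<or> (x = 2 \<and> y = 3) \<or> (x = 3 \<and> y = 1) then \<i> else -\<i>)"
definition qac :: "nat \<Rightarrow> nat \<Rightarrow> bool" where
  "qac x y = (x \<noteq> 0 \<and> y \<noteq> 0 \<and> x \<noteq> y)"

lemma qm_lt: "x < 4 \<Longrightarrow> y < 4 \<Longrightarrow> qm x y < 4"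
  unfolding qm_def by auto
lemma qph_phases: "qph x y \<in> phases"
  unfolding qph_def phases_def by auto

lemma sig_mult: "x < 4 \<Longrightarrow> y < 4 \<Longrightarrow> r < 2 \<Longrightarrow> c < 2 \<Longrightarrow>
  (\<Sum>t<2. sigma x r t * sigma y t c) = qph x y * sigma (qm x y) r c"
  apply (drule lt4, drule lt4, drule lt2, drule lt2)
  by (elim disjE; simp add: sigma_def qph_def qm_def numeral_2_eq_2 lessThan_Suc)

lemma sig_sq: "x < 4 \<Longrightarrow> r < 2 \<Longrightarrow> c < 2 \<Longrightarrow>
  (\<Sum>t<2. sigma x r t * sigma x t c) = (if r = c then 1 else 0)"
  apply (drule lt4, drule lt2, drule lt2)
  by (elim disjE; simp add: sigma_def numeral_2_eq_2 lessThan_Suc)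

lemma sig_comm: "x < 4 \<Longrightarrow> y < 4 \<Longrightarrow> r < 2 \<Longrightarrow> c < 2 \<Longrightarrow>
  (\<Sum>t<2. sigma x r t * sigma y t c) = (if qac x y then -1 else 1) * (\<Sum>t<2. sigma y r t * sigma x t c)"
  apply (drule lt4, drule lt4, drule lt2, drule lt2)
  by (elim disjE; simp add: sigma_def qac_def numeral_2_eq_2 lessThan_Suc)

lemma sig_herm: "x < 4 \<Longrightarrow> r < 2 \<Longrightarrow> c < 2 \<Longrightarrow> cnj (sigma x c r) = sigma x r c"
  apply (drule lt4, drule lt2, drule lt2)
  by (elim disjE; simp add: sigma_def)

lemma sig_tr: "x < 4 \<Longrightarrow> (\<Sum>t<2. sigma x t t) = (if x = 0 then 2 else 0)"
  apply (drule lt4)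
  by (elim disjE; simp add: sigma_def numeral_2_eq_2 lessThan_Suc)

lemma sig_complete: "q < 2 \<Longrightarrow> p < 2 \<Longrightarrow> i < 2 \<Longrightarrow> j < 2 \<Longrightarrow>
  (\<Sum>t<4. sigma t q p * sigma t i j) = (if q = j \<and> p = i then 2 else 0)"
  apply (drule lt2, drule lt2, drule lt2, drule lt2)
  by (elim disjE; simp add: sigma_def numeral_eq_Suc lessThan_Suc)

lemma sig_tr2: "x < 4 \<Longrightarrow> y < 4 \<Longrightarrow> (\<Sum>t<2. \<Sum>s<2. sigma x t s * sigma y s t) = (if x = y then 2 else 0)"
  apply (drule lt4, drule lt4)
  by (elim disjE; simp add: sigma_def numeral_2_eq_2 lessThan_Suc)

lemma sig_id: "r < 2 \<Longrightarrow> c < 2 \<Longrightarrow> sigma 0 r c = (if r = c then 1 else 0)"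
  by (simp add: sigma_def)


lemma pauli_idx_lt: "a \<in> pauli_idx n \<Longrightarrow> k < n \<Longrightarrow> a ! k < 4"
  unfolding pauli_idx_def by (auto simp: subset_iff)
lemma pauli_idx_len: "a \<in> pauli_idx n \<Longrightarrow> length a = n"
  unfolding pauli_idx_def by auto

lemma pauli_carrier[simp]: "pauli n a \<in> carrier_mat (2^n) (2^n)"
  "dim_row (pauli n a) = 2^n" "dim_col (pauli n a) = 2^n"
  unfolding pauli_tens by auto

definition pmul :: "nat list \<Rightarrow> nat list \<Rightarrow> nat list" where
  "pmul a b = map (\<lambda>k. qm (a!k) (b!k)) [0..<length a]"

lemma pmul_idx: "a \<in> pauli_idx n \<Longrightarrow> b \<in> pauli_idx n \<Longrightarrow> pmul a b \<in> pauli_idx n"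
proof -
  assume a: "a \<in> pauli_idx n" and b: "b \<in> pauli_idx n"
  have "\<forall>x \<in> set (pmul a b). x < 4"
    unfolding pmul_def using pauli_idx_lt[OF a] pauli_idx_lt[OF b] pauli_idx_len[OF a] by (auto intro!: qm_lt)
  then show ?thesis unfolding pauli_idx_def pmul_def using pauli_idx_len[OF a] by auto
qed

lemma pmul_nth: "a \<in> pauli_idx n \<Longrightarrow> k < n \<Longrightarrow> pmul a b ! k = qm (a!k) (b!k)"
  unfolding pmul_def using pauli_idx_len by auto

lemma pauli_mult: assumes a: "a \<in> pauli_idx n" and b: "b \<in> pauli_idx n"
  shows "pauli n a * pauli n b = (\<Prod>k<n. qph (a!k) (b!k)) \<cdot>\<^sub>m pauli n (pmul a b)"
proof -
  have "pauli n a * pauli n b = tens n (\<lambda>k r c. qph (a!k) (b!k) * sigma (pmul a b ! k) r c)"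
    unfolding pauli_tens tens_mult
    by (rule tens_cong) (simp add: sig_mult pauli_idx_lt[OF a] pauli_idx_lt[OF b] pmul_nth[OF a])
  then show ?thesis by (simp add: tens_scal pauli_tens)
qed

lemma pauli_sq: assumes a: "a \<in> pauli_idx n" shows "pauli n a * pauli n a = 1\<^sub>m (2^n)"
proof -
  have "pauli n a * pauli n a = tens n (\<lambda>k r c. if r = c then 1 else 0)"
    unfolding pauli_tens tens_mult
    by (rule tens_cong) (simp add: sig_sq pauli_idx_lt[OF a])
  then show ?thesis by (simp add: tens_one)
qed

lemma pauli_adj: assumes a: "a \<in> pauli_idx n" shows "adj (pauli n a) = pauli n a"
  unfolding pauli_tens tens_adj
  by (rule tens_cong) (simp add: sig_herm pauli_idx_lt[OF a])

lemma pauli_zero: "pauli n (replicate n 0) = 1\<^sub>m (2^n)"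
proof -
  have "pauli n (replicate n 0) = tens n (\<lambda>k r c. if r = c then 1 else 0)"
    unfolding pauli_tens by (rule tens_cong) (simp add: sig_id)
  then show ?thesis by (simp add: tens_one)
qed

definition csgn :: "nat \<Rightarrow> nat list \<Rightarrow> nat list \<Rightarrow> complex" where
  "csgn n a b = (\<Prod>k<n. if qac (a!k) (b!k) then -1 else 1)"

lemma pauli_comm: assumes a: "a \<in> pauli_idx n" and b: "b \<in> pauli_idx n"
  shows "pauli n a * pauli n b = csgn n a b \<cdot>\<^sub>m (pauli n b * pauli n a)"
proof -
  have "pauli n a * pauli n b = tens n (\<lambda>k r c. (if qac (a!k) (b!k) then -1 else 1) *
      (\<Sum>t<2. sigma (b!k) r t * sigma (a!k) t c))"
    unfolding pauli_tens tens_mult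
    by (rule tens_cong) (rule sig_comm, simp_all add: pauli_idx_lt[OF a] pauli_idx_lt[OF b])
  also have "\<dots> = csgn n a b \<cdot>\<^sub>m tens n (\<lambda>k r c. \<Sum>t<2. sigma (b!k) r t * sigma (a!k) t c)"
    unfolding csgn_def by (rule tens_scal)
  also have "tens n (\<lambda>k r c. \<Sum>t<2. sigma (b!k) r t * sigma (a!k) t c) = pauli n b * pauli n a"
    unfolding pauli_tens tens_mult ..
  finally show ?thesis .
qed

lemma csgn_cases: "csgn n a b = 1 \<or> csgn n a b = -1"
  unfolding csgn_def by (induction n) auto

lemma pauli_trace_mult: assumes a: "a \<in> pauli_idx n" and b: "b \<in> pauli_idx n"
  shows "mtrace (pauli n a * pauli n b) = (if a = b then 2^n else 0)"
proof -
  have "mtrace (pauli n a * pauli n b) = (\<Prod>k<n. if a!k = b!k then 2 else 0)"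
    unfolding pauli_tens tens_mult tens_trace
    by (rule prod.cong) (simp_all add: sig_tr2 pauli_idx_lt[OF a] pauli_idx_lt[OF b])
  also have "\<dots> = (if a = b then 2^n else 0)"
  proof (cases "a = b")
    case True then show ?thesis by simp
  next
    case False
    then obtain k where "k < n" "a!k \<noteq> b!k"
      using pauli_idx_len[OF a] pauli_idx_len[OF b] nth_equalityI by metis
    then show ?thesis using False by (auto simp: prod_zero_iff)
  qed
  finally show ?thesis .
qed

lemma mtrace_entries: "M \<in> carrier_mat m m \<Longrightarrow> A \<in> carrier_mat m m \<Longrightarrow>
   mtrace (A * M) = (\<Sum>q<m. \<Sum>p<m. A $$ (q,p) * M $$ (p,q))"
  unfolding mtrace_def by (auto simp: scalar_prod_def atLeast0LessThan)

lemma pauli_complete_entry: assumes i: "i < 2^n" and j: "j < 2^n" and q: "q < 2^n" and p: "p < 2^n"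
  shows "(\<Sum>a\<in>pauli_idx n. pauli n a $$ (q,p) * pauli n a $$ (i,j)) = (if q = j \<and> p = i then 2^n else 0)"
proof -
  have "(\<Sum>a\<in>pauli_idx n. pauli n a $$ (q,p) * pauli n a $$ (i,j))
     = (\<Sum>a\<in>pauli_idx n. \<Prod>k<n. sigma (a!k) (bit k q) (bit k p) * sigma (a!k) (bit k i) (bit k j))"
    using i j q p by (simp add: pauli_tens tens_index prod.distrib)
  also have "\<dots> = (\<Prod>k<n. \<Sum>t<4. sigma t (bit k q) (bit k p) * sigma t (bit k i) (bit k j))"
    by (rule sum_pauli_idx_prod)
  also have "\<dots> = (\<Prod>k<n. if bit k q = bit k j \<and> bit k p = bit k i then 2 else 0)"
    by (rule prod.cong) (simp_all add: sig_complete bit_lt2)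
  also have "\<dots> = (if q = j \<and> p = i then 2^n else 0)"
  proof (cases "q = j \<and> p = i")
    case True then show ?thesis by simp
  next
    case False
    then obtain k where "k < n" "bit k q \<noteq> bit k j \<or> bit k p \<noteq> bit k i"
      using bits_eq[OF q j] bits_eq[OF p i] by blast
    then show ?thesis using False by (auto simp: prod_zero_iff)
  qed
  finally show ?thesis .
qed

lemma pauli_expand_entry: assumes M: "M \<in> carrier_mat (2^n) (2^n)" and i: "i < 2^n" and j: "j < 2^n"
  shows "M $$ (i,j) = (\<Sum>a\<in>pauli_idx n. mtrace (pauli n a * M) * pauli n a $$ (i,j)) / 2^n"
proof -
  let ?W = "\<lambda>a q p. pauli n a $$ (q,p)"
  have "(\<Sum>a\<in>pauli_idx n. mtrace (pauli n a * M) * pauli n a $$ (i,j))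
     = (\<Sum>a\<in>pauli_idx n. \<Sum>q<2^n. \<Sum>p<2^n. M $$ (p,q) * (?W a q p * ?W a i j))"
    apply (simp only: mtrace_entries[OF M pauli_carrier(1)] sum_distrib_right)
    by (simp add: mult_ac)
  also have "\<dots> = (\<Sum>q<2^n. \<Sum>a\<in>pauli_idx n. \<Sum>p<2^n. M $$ (p,q) * (?W a q p * ?W a i j))"
    by (rule sum.swap)
  also have "\<dots> = (\<Sum>q<2^n. \<Sum>p<2^n. \<Sum>a\<in>pauli_idx n. M $$ (p,q) * (?W a q p * ?W a i j))"
    by (intro sum.cong refl) (rule sum.swap)
  also have "\<dots> = (\<Sum>q<2^n. \<Sum>p<2^n. M $$ (p,q) * (\<Sum>a\<in>pauli_idx n. ?W a q p * ?W a i j))"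
    by (simp only: sum_distrib_left)
  also have "\<dots> = (\<Sum>q<2^n. \<Sum>p<2^n. if p = i then (if q = j then M $$ (p,q) * 2^n else 0) else 0)"
    by (intro sum.cong refl) (simp add: pauli_complete_entry i j)
  also have "\<dots> = (\<Sum>q<2^n. if q = j then M $$ (i,q) * 2^n else 0)"
    using i by (simp add: sum.delta')
  also have "\<dots> = M $$ (i,j) * 2^n"
    using j by (simp add: sum.delta')
  finally show ?thesis by simp
qed

lemma pauli_coeff_inj: assumes M: "M \<in> carrier_mat (2^n) (2^n)" and M': "M' \<in> carrier_mat (2^n) (2^n)"
  and eq: "\<And>a. a \<in> pauli_idx n \<Longrightarrow> mtrace (pauli n a * M) = mtrace (pauli n a * M')"
  shows "M = M'"
proof (rule eq_matI)
  fix i j assume "i < dim_row M'" "j < dim_col M'"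
  then have i: "i < 2^n" and j: "j < 2^n" using M' by auto
  show "M $$ (i,j) = M' $$ (i,j)"
    using pauli_expand_entry[OF M i j] pauli_expand_entry[OF M' i j] eq by simp
qed (use M M' in simp_all)


lemma smult_smult_mat: "a \<cdot>\<^sub>m (b \<cdot>\<^sub>m A) = (a * b) \<cdot>\<^sub>m (A :: complex mat)"
  by (rule eq_matI) auto

lemma mult_sq: "A \<in> carrier_mat m m \<Longrightarrow> B \<in> carrier_mat m m \<Longrightarrow> A * B \<in> carrier_mat m m"
  by auto

lemma massoc: "A \<in> carrier_mat m m \<Longrightarrow> B \<in> carrier_mat m m \<Longrightarrow> C \<in> carrier_mat m m \<Longrightarrow> A * B * C = A * (B * C)"
  by (rule assoc_mult_mat)

lemma phases_alt: "{1, -1, \<i>, -\<i>} = phases" unfolding phases_def by auto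

lemma pg_iff: "Q \<in> pauli_group n \<longleftrightarrow> (\<exists>c\<in>phases. \<exists>a\<in>pauli_idx n. Q = c \<cdot>\<^sub>m pauli n a)"
  unfolding pauli_group_def pauli_ops_def phases_alt by auto

lemma pg_carrier: "Q \<in> pauli_group n \<Longrightarrow> Q \<in> carrier_mat (2^n) (2^n)"
  unfolding pg_iff by auto

lemma pauli_in_pg: "a \<in> pauli_idx n \<Longrightarrow> pauli n a \<in> pauli_group n"
  unfolding pg_iff by (rule bexI[of _ 1], rule bexI[of _ a]) (auto simp: phases_def)

lemma pg_smult: "c \<in> phases \<Longrightarrow> Q \<in> pauli_group n \<Longrightarrow> c \<cdot>\<^sub>m Q \<in> pauli_group n"
  unfolding pg_iff by (auto simp: phases_mult smult_smult_mat intro!: bexI)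

lemma pg_mult: assumes Q: "Q \<in> pauli_group n" and R: "R \<in> pauli_group n" shows "Q * R \<in> pauli_group n"
proof -
  from Q obtain c a where c: "c \<in> phases" and a: "a \<in> pauli_idx n" and Qe: "Q = c \<cdot>\<^sub>m pauli n a"
    unfolding pg_iff by auto
  from R obtain c' b where c': "c' \<in> phases" and b: "b \<in> pauli_idx n" and Re: "R = c' \<cdot>\<^sub>m pauli n b"
    unfolding pg_iff by auto
  have "Q * R = (c * c') \<cdot>\<^sub>m (pauli n a * pauli n b)"
    unfolding Qe Re
    by (simp add: mult_smult_assoc_mat[OF pauli_carrier(1) smult_carrier_mat[OF pauli_carrier(1)]]
      mult_smult_distrib[OF pauli_carrier(1) pauli_carrier(1)] smult_smult_mat mult.commute)
  also have "\<dots> = (c * c' * (\<Prod>k<n. qph (a!k) (b!k))) \<cdot>\<^sub>m pauli n (pmul a b)"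
    by (simp add: pauli_mult[OF a b] smult_smult_mat)
  finally show ?thesis unfolding pg_iff
    using pmul_idx[OF a b] phases_mult[OF phases_mult[OF c c'] phases_prod[OF qph_phases]] by blast
qed

lemma cliff_carrier: "U \<in> clifford n \<Longrightarrow> U \<in> carrier_mat (2^n) (2^n)"
  unfolding clifford_def by auto
lemma cliff_unit: "U \<in> clifford n \<Longrightarrow> U * adj U = 1\<^sub>m (2^n)" "U \<in> clifford n \<Longrightarrow> adj U * U = 1\<^sub>m (2^n)"
  unfolding clifford_def by auto
lemma cliff_adj: "U \<in> clifford n \<Longrightarrow> adj U \<in> clifford n"
  unfolding clifford_def by auto
lemma cliff_one: "1\<^sub>m (2^n) \<in> clifford n"
proof -
  have "1\<^sub>m (2^n) * P * 1\<^sub>m (2^n) = P" if "P \<in> pauli_group n" for P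
    using pg_carrier[OF that] by simp
  then show ?thesis unfolding clifford_def by auto
qed

lemma cliff_mult: assumes U: "U \<in> clifford n" and V: "V \<in> clifford n" shows "U * V \<in> clifford n"
proof -
  have Uc: "U \<in> carrier_mat (2^n) (2^n)" and Vc: "V \<in> carrier_mat (2^n) (2^n)"
    using U V cliff_carrier by auto
  have aUV: "adj (U * V) = adj V * adj U" using adj_mult[OF Uc Vc] .
  have "U * V * adj (U * V) = U * (V * adj V) * adj U"
    unfolding aUV using Uc Vc by (simp add: massoc[where m="2^n"] mult_sq)
  also have "\<dots> = 1\<^sub>m (2^n)" using cliff_unit[OF U] cliff_unit[OF V] Uc by simp
  finally have 1: "U * V * adj (U * V) = 1\<^sub>m (2^n)" .
  have "adj (U * V) * (U * V) = adj V * (adj U * U) * V"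
    unfolding aUV using Uc Vc by (simp add: massoc[where m="2^n"] mult_sq)
  also have "\<dots> = 1\<^sub>m (2^n)" using cliff_unit[OF U] cliff_unit[OF V] Vc by simp
  finally have 2: "adj (U * V) * (U * V) = 1\<^sub>m (2^n)" .
  have 3: "U * V * P * adj (U * V) \<in> pauli_group n" if P: "P \<in> pauli_group n" for P
  proof -
    have Pc: "P \<in> carrier_mat (2^n) (2^n)" using pg_carrier[OF P] .
    have "V * P * adj V \<in> pauli_group n" using V P unfolding clifford_def by auto
    then have "U * (V * P * adj V) * adj U \<in> pauli_group n" using U unfolding clifford_def by auto
    moreover have "U * (V * P * adj V) * adj U = U * V * P * adj (U * V)"
      unfolding aUV using Uc Vc Pc by (simp add: massoc[where m="2^n"] mult_sq)
    ultimately show ?thesis by simp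
  qed
  have 4: "adj (U * V) * P * (U * V) \<in> pauli_group n" if P: "P \<in> pauli_group n" for P
  proof -
    have Pc: "P \<in> carrier_mat (2^n) (2^n)" using pg_carrier[OF P] .
    have "adj U * P * U \<in> pauli_group n" using U P unfolding clifford_def by auto
    then have "adj V * (adj U * P * U) * V \<in> pauli_group n" using V unfolding clifford_def by auto
    moreover have "adj V * (adj U * P * U) * V = adj (U * V) * P * (U * V)"
      unfolding aUV using Uc Vc Pc by (simp add: massoc[where m="2^n"] mult_sq)
    ultimately show ?thesis by simp
  qed
  show ?thesis unfolding clifford_def using 1 2 3 4 Uc Vc by auto
qed

lemma cliff_conj_pauli: assumes U: "U \<in> clifford n" and a: "a \<in> pauli_idx n"
  shows "\<exists>c\<in>phases. \<exists>b\<in>pauli_idx n. adj U * pauli n a * U = c \<cdot>\<^sub>m pauli n b"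
proof -
  have "adj U * pauli n a * U \<in> pauli_group n" using U pauli_in_pg[OF a] unfolding clifford_def by auto
  then show ?thesis unfolding pg_iff .
qed


lemma conj_calc:
  fixes A E P :: "complex mat"
  assumes A: "A \<in> carrier_mat m m" and E: "E \<in> carrier_mat m m" and P: "P \<in> carrier_mat m m"
    and AA: "A * A = 1\<^sub>m m" and EE: "E * E = 1\<^sub>m m" and EA: "E * A = (-1) \<cdot>\<^sub>m (A * E)"
    and AP: "A * P = x \<cdot>\<^sub>m (P * A)" and EP: "E * P = y \<cdot>\<^sub>m (P * E)"
  shows "(A + E) * P * (A + E) = (x + y) \<cdot>\<^sub>m P + (x - y) \<cdot>\<^sub>m (P * (A * E))"
proof -
  have AE: "A + E \<in> carrier_mat m m" using A E by simp
  have "(A + E) * P * (A + E) = (A * P + E * P) * (A + E)"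
    using add_mult_distrib_mat[OF A E P] by simp
  also have "\<dots> = A * P * (A + E) + E * P * (A + E)"
    using add_mult_distrib_mat[OF mult_sq[OF A P] mult_sq[OF E P] AE] by simp
  also have "A * P * (A + E) = A * P * A + A * P * E"
    using mult_add_distrib_mat[OF mult_sq[OF A P] A E] .
  also have "E * P * (A + E) = E * P * A + E * P * E"
    using mult_add_distrib_mat[OF mult_sq[OF E P] A E] .
  also have "A * P * A = x \<cdot>\<^sub>m P"
    using A P AA by (simp add: AP mult_smult_assoc_mat[OF mult_sq[OF P A] A] massoc[where m=m])
  also have "A * P * E = x \<cdot>\<^sub>m (P * (A * E))"
    using A P E by (simp add: AP mult_smult_assoc_mat[OF mult_sq[OF P A] E] massoc[where m=m])
  also have "E * P * A = (- y) \<cdot>\<^sub>m (P * (A * E))"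
    using A P E by (simp add: EP mult_smult_assoc_mat[OF mult_sq[OF P E] A] massoc[where m=m] EA
        mult_smult_distrib[OF P mult_sq[OF A E]] smult_smult_mat)
  also have "E * P * E = y \<cdot>\<^sub>m P"
    using E P EE by (simp add: EP mult_smult_assoc_mat[OF mult_sq[OF P E] E] massoc[where m=m])
  finally show ?thesis
    by (intro eq_matI) (use A E P in \<open>auto simp: algebra_simps\<close>)
qed

lemma sqrt2_half: "complex_of_real (1 / sqrt 2) * complex_of_real (1 / sqrt 2) = 1/2"
  by (simp flip: of_real_mult)

lemma anti_cliff:
  assumes a: "a \<in> pauli_idx n" and e: "e \<in> pauli_idx n"
    and anti: "pauli n e * pauli n a = (-1) \<cdot>\<^sub>m (pauli n a * pauli n e)"
  shows "\<exists>V\<in>clifford n. V * pauli n a * adj V = pauli n e"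
proof -
  define A where "A = pauli n a"
  define E where "E = pauli n e"
  define s where "s = complex_of_real (1 / sqrt 2)"
  define V where "V = s \<cdot>\<^sub>m (A + E)"
  have Ac: "A \<in> carrier_mat (2^n) (2^n)" and Ec: "E \<in> carrier_mat (2^n) (2^n)"
    unfolding A_def E_def by auto
  have Vc: "V \<in> carrier_mat (2^n) (2^n)" unfolding V_def using Ac Ec by simp
  have ss: "s * s = 1/2" unfolding s_def by (rule sqrt2_half)
  have adjV: "adj V = V"
    unfolding V_def A_def E_def adj_smult adj_add[OF pauli_carrier(1) pauli_carrier(1)] pauli_adj[OF a] pauli_adj[OF e]
    by (simp add: s_def)
  have AA: "A * A = 1\<^sub>m (2^n)" unfolding A_def by (rule pauli_sq[OF a])
  have EE: "E * E = 1\<^sub>m (2^n)" unfolding E_def by (rule pauli_sq[OF e])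
  have EA: "E * A = (-1) \<cdot>\<^sub>m (A * E)" unfolding A_def E_def by (rule anti)
  have VPV: "V * P * V = ((x + y) / 2) \<cdot>\<^sub>m P + ((x - y) / 2) \<cdot>\<^sub>m (P * (A * E))"
    if P: "P \<in> carrier_mat (2^n) (2^n)" and AP: "A * P = x \<cdot>\<^sub>m (P * A)" and EP: "E * P = y \<cdot>\<^sub>m (P * E)" for P x y
  proof -
    have AEc: "A + E \<in> carrier_mat (2^n) (2^n)" using Ac Ec by simp
    have "V * P * V = (s * s) \<cdot>\<^sub>m ((A + E) * P * (A + E))"
      unfolding V_def using AEc P
      by (simp add: mult_smult_assoc_mat[of _ "2^n" "2^n"] mult_smult_distrib[of _ "2^n" "2^n"] mult_sq smult_smult_mat)
    also have "\<dots> = (1/2) \<cdot>\<^sub>m ((x + y) \<cdot>\<^sub>m P + (x - y) \<cdot>\<^sub>m (P * (A * E)))"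
      unfolding ss conj_calc[OF Ac Ec P AA EE EA AP EP] ..
    finally show ?thesis
      by (intro eq_matI) (use Ac Ec P in \<open>auto simp: field_simps\<close>)
  qed
  have VV: "V * V = 1\<^sub>m (2^n)"
  proof -
    have "V * 1\<^sub>m (2^n) * V = ((1 + 1) / 2) \<cdot>\<^sub>m 1\<^sub>m (2^n) + ((1 - 1) / 2) \<cdot>\<^sub>m (1\<^sub>m (2^n) * (A * E))"
      by (rule VPV) (use Ac Ec in auto)
    then show ?thesis using Vc Ac Ec by (auto intro!: eq_matI)
  qed
  have VAV: "V * A * V = E"
  proof -
    have "V * A * V = ((1 + (-1)) / 2) \<cdot>\<^sub>m A + ((1 - (-1)) / 2) \<cdot>\<^sub>m (A * (A * E))"
      by (rule VPV) (use Ac EA in auto)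
    also have "A * (A * E) = E" using Ac Ec AA by (simp flip: massoc[where m="2^n"])
    finally show ?thesis using Ac Ec by (auto intro!: eq_matI)
  qed
  have conjp: "V * pauli n p * V \<in> pauli_group n" if p: "p \<in> pauli_idx n" for p
  proof -
    let ?P = "pauli n p"
    have AP: "A * ?P = csgn n a p \<cdot>\<^sub>m (?P * A)" unfolding A_def by (rule pauli_comm[OF a p])
    have EP: "E * ?P = csgn n e p \<cdot>\<^sub>m (?P * E)" unfolding E_def by (rule pauli_comm[OF e p])
    have eq: "V * ?P * V = ((csgn n a p + csgn n e p) / 2) \<cdot>\<^sub>m ?P + ((csgn n a p - csgn n e p) / 2) \<cdot>\<^sub>m (?P * (A * E))"
      by (rule VPV[OF pauli_carrier(1) AP EP])
    have PAE: "?P * (A * E) \<in> pauli_group n"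
      unfolding A_def E_def by (intro pg_mult pauli_in_pg p a e)
    have Pg: "?P \<in> pauli_group n" by (rule pauli_in_pg[OF p])
    have PAEc: "?P * (A * E) \<in> carrier_mat (2^n) (2^n)" using Ac Ec by (simp add: mult_sq)
    consider "csgn n a p = 1" "csgn n e p = 1" | "csgn n a p = 1" "csgn n e p = -1"
      | "csgn n a p = -1" "csgn n e p = 1" | "csgn n a p = -1" "csgn n e p = -1"
      using csgn_cases[of n a p] csgn_cases[of n e p] by blast
    then show ?thesis
    proof cases
      case 1
      then have "V * ?P * V = 1 \<cdot>\<^sub>m ?P" unfolding eq using PAEc by (auto intro!: eq_matI)
      then show ?thesis using pg_smult[OF _ Pg, of 1] by (simp add: phases_def)
    next
      case 2
      then have "V * ?P * V = 1 \<cdot>\<^sub>m (?P * (A * E))" unfolding eq using PAEc by (auto intro!: eq_matI)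
      then show ?thesis using pg_smult[OF _ PAE, of 1] by (simp add: phases_def)
    next
      case 3
      then have "V * ?P * V = (-1) \<cdot>\<^sub>m (?P * (A * E))" unfolding eq using PAEc by (auto intro!: eq_matI)
      then show ?thesis using pg_smult[OF _ PAE, of "-1"] by (simp add: phases_def)
    next
      case 4
      then have "V * ?P * V = (-1) \<cdot>\<^sub>m ?P" unfolding eq using PAEc by (auto intro!: eq_matI)
      then show ?thesis using pg_smult[OF _ Pg, of "-1"] by (simp add: phases_def)
    qed
  qed
  have conj: "V * Q * V \<in> pauli_group n" if Q: "Q \<in> pauli_group n" for Q
  proof -
    from Q obtain c p where c: "c \<in> phases" and p: "p \<in> pauli_idx n" and Qe: "Q = c \<cdot>\<^sub>m pauli n p"
      unfolding pg_iff by auto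
    have "V * Q * V = c \<cdot>\<^sub>m (V * pauli n p * V)"
      unfolding Qe mult_smult_distrib[OF Vc pauli_carrier(1)]
      by (rule mult_smult_assoc_mat[OF mult_sq[OF Vc pauli_carrier(1)] Vc])
    then show ?thesis using pg_smult[OF c conjp[OF p]] by simp
  qed
  have "V \<in> clifford n" unfolding clifford_def using Vc VV adjV conj by auto
  moreover have "V * pauli n a * adj V = pauli n e" using VAV unfolding adjV A_def E_def .
  ultimately show ?thesis by blast
qed


lemma qac_sym: "qac x y = qac y x" unfolding qac_def by auto

lemma csgn_sym: "csgn n a b = csgn n b a" unfolding csgn_def by (simp add: qac_sym)

lemma csgn_one_pos: assumes l: "l < n" and q: "qac (e!l) (a!l)" and o: "\<And>k. k < n \<Longrightarrow> k \<noteq> l \<Longrightarrow> \<not> qac (e!k) (a!k)"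
  shows "csgn n e a = -1"
proof -
  have "csgn n e a = (\<Prod>k<n. if k = l then -1 else 1)"
    unfolding csgn_def by (rule prod.cong) (use q o in auto)
  also have "\<dots> = -1" using l by (simp add: prod.delta)
  finally show ?thesis .
qed

lemma map_idx: "(\<And>k. k < n \<Longrightarrow> f k < 4) \<Longrightarrow> map f [0..<n] \<in> pauli_idx n"
  unfolding pauli_idx_def by auto

lemma exists_anti:
  assumes a: "a \<in> pauli_idx n" and b: "b \<in> pauli_idx n" and a0: "a \<noteq> replicate n 0"
    and b0: "b \<noteq> replicate n 0" and ab: "a \<noteq> b"
  shows "\<exists>e\<in>pauli_idx n. csgn n e a = -1 \<and> csgn n e b = -1"
proof -
  have la: "length a = n" and lb: "length b = n" using a b by (auto simp: pauli_idx_def)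
  have a4: "\<And>k. k < n \<Longrightarrow> a!k < 4" and b4: "\<And>k. k < n \<Longrightarrow> b!k < 4"
    using pauli_idx_lt a b by auto
  obtain ka where ka: "ka < n" "a!ka \<noteq> 0" using a0 la by (metis nth_equalityI length_replicate nth_replicate)
  obtain kb where kb: "kb < n" "b!kb \<noteq> 0" using b0 lb by (metis nth_equalityI length_replicate nth_replicate)
  show ?thesis
  proof (cases "\<exists>l<n. a!l = b!l \<and> a!l \<noteq> 0")
    case True
    then obtain l where l: "l < n" "a!l = b!l" "a!l \<noteq> 0" by blast
    define v where "v = (if a!l = 1 then 2 else (1::nat))"
    define e where "e = map (\<lambda>k. if k = l then v else 0) [0..<n]"
    have e: "e \<in> pauli_idx n" unfolding e_def by (rule map_idx) (auto simp: v_def)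
    have "csgn n e a = -1" by (rule csgn_one_pos[OF l(1)]) (use l in \<open>auto simp: e_def v_def qac_def\<close>)
    moreover have "csgn n e b = -1" by (rule csgn_one_pos[OF l(1)]) (use l in \<open>auto simp: e_def v_def qac_def\<close>)
    ultimately show ?thesis using e by blast
  next
    case nA: False
    show ?thesis
    proof (cases "\<exists>l<n. a!l \<noteq> 0 \<and> b!l \<noteq> 0 \<and> a!l \<noteq> b!l")
      case True
      then obtain l where l: "l < n" "a!l \<noteq> 0" "b!l \<noteq> 0" "a!l \<noteq> b!l" by blast
      define v where "v = 6 - a!l - b!l"
      define e where "e = map (\<lambda>k. if k = l then v else 0) [0..<n]"
      have v: "v < 4" "v \<noteq> 0" "v \<noteq> a!l" "v \<noteq> b!l"
        using l lt4[OF a4[OF l(1)]] lt4[OF b4[OF l(1)]] unfolding v_def by auto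
      have e: "e \<in> pauli_idx n" unfolding e_def by (rule map_idx) (use v in auto)
      have "csgn n e a = -1" by (rule csgn_one_pos[OF l(1)]) (use l v in \<open>auto simp: e_def qac_def\<close>)
      moreover have "csgn n e b = -1" by (rule csgn_one_pos[OF l(1)]) (use l v in \<open>auto simp: e_def qac_def\<close>)
      ultimately show ?thesis using e by blast
    next
      case nB: False
      have bka: "b!ka = 0" using nA nB ka by blast
      have akb: "a!kb = 0" using nA nB kb by blast
      have kk: "ka \<noteq> kb" using bka kb by auto
      define v1 where "v1 = (if a!ka = 1 then 2 else (1::nat))"
      define v2 where "v2 = (if b!kb = 1 then 2 else (1::nat))"
      define e where "e = map (\<lambda>k. if k = ka then v1 else if k = kb then v2 else 0) [0..<n]"
      have e: "e \<in> pauli_idx n" unfolding e_def by (rule map_idx) (auto simp: v1_def v2_def)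
      have "csgn n e a = -1" by (rule csgn_one_pos[OF ka(1)])
          (use ka kb kk akb in \<open>auto simp: e_def v1_def v2_def qac_def\<close>)
      moreover have "csgn n e b = -1" by (rule csgn_one_pos[OF kb(1)])
          (use ka kb kk bka in \<open>auto simp: e_def v1_def v2_def qac_def\<close>)
      ultimately show ?thesis using e by blast
    qed
  qed
qed

lemma anti_of_csgn: "e \<in> pauli_idx n \<Longrightarrow> a \<in> pauli_idx n \<Longrightarrow> csgn n e a = -1 \<Longrightarrow>
  pauli n e * pauli n a = (-1) \<cdot>\<^sub>m (pauli n a * pauli n e)"
  using pauli_comm by metis

lemma trans_pauli:
  assumes a: "a \<in> pauli_idx n" and b: "b \<in> pauli_idx n" and a0: "a \<noteq> replicate n 0"
    and b0: "b \<noteq> replicate n 0"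
  shows "\<exists>V\<in>clifford n. V * pauli n a * adj V = pauli n b"
proof (cases "a = b")
  case True
  then show ?thesis using cliff_one[of n] by (intro bexI[of _ "1\<^sub>m (2^n)"]) auto
next
  case False
  obtain e where e: "e \<in> pauli_idx n" and ea: "csgn n e a = -1" and eb: "csgn n e b = -1"
    using exists_anti[OF a b a0 b0 False] by blast
  obtain V1 where V1: "V1 \<in> clifford n" "V1 * pauli n a * adj V1 = pauli n e"
    using anti_cliff[OF a e anti_of_csgn[OF e a ea]] by blast
  have be: "csgn n b e = -1" using eb csgn_sym by metis
  obtain V2 where V2: "V2 \<in> clifford n" "V2 * pauli n e * adj V2 = pauli n b"
    using anti_cliff[OF e b anti_of_csgn[OF b e be]] by blast
  have c1: "V1 \<in> carrier_mat (2^n) (2^n)" and c2: "V2 \<in> carrier_mat (2^n) (2^n)"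
    using V1 V2 cliff_carrier by auto
  have "V2 * V1 * pauli n a * adj (V2 * V1) = V2 * (V1 * pauli n a * adj V1) * adj V2"
    using c1 c2 by (simp add: adj_mult[OF c2 c1] massoc[where m="2^n"] mult_sq)
  also have "\<dots> = pauli n b" using V1 V2 by simp
  finally show ?thesis using cliff_mult[OF V2(1) V1(1)] by blast
qed


lemma proj_carrier: "dim_vec z = m \<Longrightarrow> proj z \<in> carrier_mat m m"
  unfolding proj_def by auto

lemma mtrace_proj: "dim_vec z = m \<Longrightarrow> mtrace (proj z) = (\<Sum>i<m. complex_of_real ((cmod (z $ i))\<^sup>2))"
  unfolding mtrace_def proj_def
  by (auto intro!: sum.cong simp only: complex_norm_square) simp_all

lemma mtrace_conj: assumes U: "U \<in> carrier_mat m m" and M: "M \<in> carrier_mat m m" and X: "X \<in> carrier_mat m m"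
  shows "mtrace (X * (U * M * adj U)) = mtrace (adj U * X * U * M)"
proof -
  have "X * (U * M * adj U) = (X * U * M) * adj U"
    using U M X by (simp add: massoc[where m=m] mult_sq)
  then have "mtrace (X * (U * M * adj U)) = mtrace (adj U * (X * U * M))"
    using mtrace_comm[of "X * U * M" m m "adj U"] U M X by (simp add: mult_sq)
  also have "adj U * (X * U * M) = adj U * X * U * M"
    using U M X by (simp add: massoc[where m=m] mult_sq)
  finally show ?thesis .
qed

lemma mtrace_smult_mult: "B \<in> carrier_mat m m \<Longrightarrow> A \<in> carrier_mat m m \<Longrightarrow> mtrace ((c \<cdot>\<^sub>m A) * B) = c * mtrace (A * B)"
proof -
  assume B: "B \<in> carrier_mat m m" and A: "A \<in> carrier_mat m m"
  have "(c \<cdot>\<^sub>m A) * B = c \<cdot>\<^sub>m (A * B)" by (rule mult_smult_assoc_mat[OF A B])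
  then show ?thesis using mtrace_smult[OF mult_sq[OF A B]] by simp
qed

locale orbit =
  fixes n :: nat and z :: "complex vec"
  assumes dz: "dim_vec z = 2^n" and nz: "(\<Sum>i<2 ^ n. (cmod (z $ i))\<^sup>2) = 1"
begin

abbreviation "\<rho> \<equiv> proj z"
abbreviation "Orb \<equiv> clifford_orbit n z"
abbreviation "d \<equiv> (2::nat)^n"

lemma rho_c: "\<rho> \<in> carrier_mat d d" using proj_carrier[OF dz] .

lemma tr_rho: "mtrace \<rho> = 1"
proof -
  have "mtrace \<rho> = complex_of_real (\<Sum>i<2 ^ n. (cmod (z $ i))\<^sup>2)"
    unfolding mtrace_proj[OF dz] by simp
  then show ?thesis using nz by simp
qed

lemma O_c: "P \<in> Orb \<Longrightarrow> P \<in> carrier_mat d d"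
  unfolding clifford_orbit_def using rho_c cliff_carrier by (auto simp: mult_sq)

lemma O_iff: "P \<in> Orb \<longleftrightarrow> (\<exists>U\<in>clifford n. P = U * \<rho> * adj U)"
  unfolding clifford_orbit_def by auto

lemma O_ne: "\<rho> \<in> Orb"
proof -
  have "1\<^sub>m d * \<rho> * adj (1\<^sub>m d) = \<rho>" using rho_c by simp
  then show ?thesis unfolding O_iff using cliff_one by metis
qed

lemma O_tr: "P \<in> Orb \<Longrightarrow> mtrace P = 1"
proof -
  assume "P \<in> Orb"
  then obtain U where U: "U \<in> clifford n" and P: "P = U * \<rho> * adj U" unfolding O_iff by auto
  have Uc: "U \<in> carrier_mat d d" using cliff_carrier[OF U] .
  have "mtrace P = mtrace (1\<^sub>m d * (U * \<rho> * adj U))" using P Uc rho_c by (simp add: mult_sq)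
  also have "\<dots> = mtrace (adj U * 1\<^sub>m d * U * \<rho>)" by (rule mtrace_conj[OF Uc rho_c]) simp
  also have "\<dots> = mtrace \<rho>" using cliff_unit(2)[OF U] Uc rho_c by simp
  finally show ?thesis using tr_rho by simp
qed

lemma O_conj: assumes V: "V \<in> clifford n" and P: "P \<in> Orb" shows "adj V * P * V \<in> Orb"
proof -
  obtain U where U: "U \<in> clifford n" and Pe: "P = U * \<rho> * adj U" using P unfolding O_iff by auto
  have Uc: "U \<in> carrier_mat d d" and Vc: "V \<in> carrier_mat d d" using U V cliff_carrier by auto
  have "adj V * P * V = (adj V * U) * \<rho> * adj (adj V * U)"
    unfolding Pe adj_mult[OF adj_carrier_mat[OF Vc] Uc] using Uc Vc rho_c
    by (simp add: massoc[where m=d] mult_sq)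
  moreover have "adj V * U \<in> clifford n" using cliff_mult[OF cliff_adj[OF V] U] .
  ultimately show ?thesis unfolding O_iff by blast
qed

lemma sum_Orb_conj: assumes V: "V \<in> clifford n"
  shows "(\<Sum>P\<in>Orb. f (adj V * P * V)) = (\<Sum>P\<in>Orb. f P)"
proof (rule sum.reindex_bij_witness[where i = "\<lambda>P. V * P * adj V" and j = "\<lambda>P. adj V * P * V"])
  have Vc: "V \<in> carrier_mat d d" using cliff_carrier[OF V] .
  fix P assume P: "P \<in> Orb"
  have Pc: "P \<in> carrier_mat d d" using O_c[OF P] .
  show "adj V * P * V \<in> Orb" using O_conj[OF V P] .
  show "V * (adj V * P * V) * adj V = P"
    using Vc Pc cliff_unit[OF V] by (simp add: massoc[where m=d] mult_sq flip: massoc[where m=d, of V "adj V"])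
  show "V * P * adj V \<in> Orb" using O_conj[OF cliff_adj[OF V] P] by simp
  show "adj V * (V * P * adj V) * V = P"
    using Vc Pc cliff_unit[OF V] by (simp add: massoc[where m=d] mult_sq flip: massoc[where m=d, of "adj V" V])
  show "f (adj V * P * V) = f (adj V * P * V)" ..
qed

definition S :: "complex mat \<Rightarrow> real" where
  "S M = (\<Sum>P\<in>Orb. cmod (mtrace (P * M)))"

lemma S_conj: assumes V: "V \<in> clifford n" and M: "M \<in> carrier_mat d d"
  shows "S (V * M * adj V) = S M"
proof -
  have Vc: "V \<in> carrier_mat d d" using cliff_carrier[OF V] .
  have "S (V * M * adj V) = (\<Sum>P\<in>Orb. cmod (mtrace (adj V * P * V * M)))"
    unfolding S_def by (intro sum.cong refl) (simp add: mtrace_conj[OF Vc M O_c])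
  also have "\<dots> = (\<Sum>P\<in>Orb. cmod (mtrace (P * M)))"
    using sum_Orb_conj[OF V, of "\<lambda>Q. cmod (mtrace (Q * M))"] by simp
  finally show ?thesis unfolding S_def .
qed

lemma S_const: assumes a: "a \<in> pauli_idx n" and b: "b \<in> pauli_idx n"
  and a0: "a \<noteq> replicate n 0" and b0: "b \<noteq> replicate n 0"
  shows "S (pauli n b) = S (pauli n a)"
proof -
  obtain V where V: "V \<in> clifford n" and e: "V * pauli n a * adj V = pauli n b"
    using trans_pauli[OF a b a0 b0] by blast
  have "S (V * pauli n a * adj V) = S (pauli n a)" by (rule S_conj[OF V pauli_carrier(1)])
  with e show ?thesis by simp
qed


definition F :: "complex set" where
  "F = (\<lambda>(c,b). c * mtrace (pauli n b * \<rho>)) ` (phases \<times> pauli_idx n)"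

lemma F_finite: "finite F"
  unfolding F_def using phases_finite finite_pauli_idx by auto

lemma coef_in: assumes P: "P \<in> Orb" and a: "a \<in> pauli_idx n"
  shows "mtrace (pauli n a * P) \<in> F"
proof -
  obtain U where U: "U \<in> clifford n" and Pe: "P = U * \<rho> * adj U" using P unfolding O_iff by auto
  have Uc: "U \<in> carrier_mat d d" using cliff_carrier[OF U] .
  obtain c b where c: "c \<in> phases" and b: "b \<in> pauli_idx n" and e: "adj U * pauli n a * U = c \<cdot>\<^sub>m pauli n b"
    using cliff_conj_pauli[OF U a] by blast
  have "mtrace (pauli n a * P) = mtrace (adj U * pauli n a * U * \<rho>)"
    unfolding Pe by (rule mtrace_conj[OF Uc rho_c pauli_carrier(1)])
  also have "\<dots> = c * mtrace (pauli n b * \<rho>)"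
    unfolding e by (rule mtrace_smult_mult[OF rho_c pauli_carrier(1)])
  finally show ?thesis unfolding F_def using c b by force
qed

definition coef :: "complex mat \<Rightarrow> nat list \<Rightarrow> complex" where
  "coef P = restrict (\<lambda>a. mtrace (pauli n a * P)) (pauli_idx n)"

lemma finite_Orb: "finite Orb"
proof -
  have inj: "inj_on coef Orb"
  proof (rule inj_onI)
    fix P Q assume P: "P \<in> Orb" and Q: "Q \<in> Orb" and e: "coef P = coef Q"
    show "P = Q"
    proof (rule pauli_coeff_inj[OF O_c[OF P] O_c[OF Q]])
      fix a assume a: "a \<in> pauli_idx n"
      show "mtrace (pauli n a * P) = mtrace (pauli n a * Q)"
        using fun_cong[OF e, of a] a unfolding coef_def by simp
    qed
  qed
  have "coef ` Orb \<subseteq> PiE (pauli_idx n) (\<lambda>_. F)"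
    unfolding coef_def using coef_in by auto
  moreover have "finite (PiE (pauli_idx n) (\<lambda>_. F))"
    using finite_PiE[OF finite_pauli_idx F_finite] .
  ultimately have "finite (coef ` Orb)" by (rule finite_subset)
  then show ?thesis using finite_image_iff[OF inj] by simp
qed

lemma card_Orb_pos: "card Orb > 0"
  using finite_Orb O_ne card_gt_0_iff by blast

end

lemma char_l1_conj: assumes U: "U \<in> clifford n" and M: "M \<in> carrier_mat (2^n) (2^n)"
  shows "char_l1 n (U * M * adj U) = char_l1 n M"
proof -
  let ?d = "(2::nat)^n"
  have Uc: "U \<in> carrier_mat ?d ?d" using cliff_carrier[OF U] .
  have "\<forall>a\<in>pauli_idx n. \<exists>cb. fst cb \<in> phases \<and> snd cb \<in> pauli_idx n \<and>
      adj U * pauli n a * U = fst cb \<cdot>\<^sub>m pauli n (snd cb)"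
    using cliff_conj_pauli[OF U] by fastforce
  then obtain f where f: "\<And>a. a \<in> pauli_idx n \<Longrightarrow> fst (f a) \<in> phases \<and> snd (f a) \<in> pauli_idx n \<and>
      adj U * pauli n a * U = fst (f a) \<cdot>\<^sub>m pauli n (snd (f a))"
    by metis
  define c where "c a = fst (f a)" for a
  define p where "p a = snd (f a)" for a
  have c: "\<And>a. a \<in> pauli_idx n \<Longrightarrow> c a \<in> phases" and p: "\<And>a. a \<in> pauli_idx n \<Longrightarrow> p a \<in> pauli_idx n"
    and e: "\<And>a. a \<in> pauli_idx n \<Longrightarrow> adj U * pauli n a * U = c a \<cdot>\<^sub>m pauli n (p a)"
    using f unfolding c_def p_def by auto
  have tr_conj: "mtrace ((adj U * A * U) * (adj U * B * U)) = mtrace (A * B)"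
    if A: "A \<in> carrier_mat ?d ?d" and B: "B \<in> carrier_mat ?d ?d" for A B
  proof -
    have "(adj U * A * U) * (adj U * B * U) = adj U * (A * B) * U"
      using A B Uc cliff_unit[OF U] by (simp add: massoc[where m="?d"] mult_sq flip: massoc[where m="?d", of U "adj U"])
    then have "mtrace ((adj U * A * U) * (adj U * B * U)) = mtrace ((adj U * (A * B)) * U)" by simp
    also have "\<dots> = mtrace (U * (adj U * (A * B)))"
      using A B Uc by (intro mtrace_comm[of _ ?d ?d]) (auto simp: mult_sq)
    also have "\<dots> = mtrace (A * B)"
      using A B Uc cliff_unit[OF U] by (simp add: mult_sq flip: massoc[where m="?d"])
    finally show ?thesis .
  qed
  have inj: "inj_on p (pauli_idx n)"
  proof (rule inj_onI, rule ccontr)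
    fix a b assume a: "a \<in> pauli_idx n" and b: "b \<in> pauli_idx n" and pe: "p a = p b" and ne: "a \<noteq> b"
    have "mtrace ((adj U * pauli n a * U) * (adj U * pauli n b * U)) = 0"
      using tr_conj[OF pauli_carrier(1) pauli_carrier(1)] pauli_trace_mult[OF a b] ne by simp
    moreover have "mtrace ((adj U * pauli n a * U) * (adj U * pauli n b * U)) = c a * c b * 2^n"
      unfolding e[OF a] e[OF b] pe
      using mtrace_smult_mult[OF _ pauli_carrier(1)] pauli_trace_mult[OF p[OF b] p[OF b]]
      by (simp add: mult_smult_distrib[OF pauli_carrier(1) pauli_carrier(1)] mtrace_smult[of _ ?d] mult_sq
          mult_smult_assoc_mat[OF pauli_carrier(1) pauli_carrier(1)])
    moreover have "c a \<noteq> 0" "c b \<noteq> 0" using c[OF a] c[OF b] phases_cmod by fastforce+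
    ultimately show False by simp
  qed
  have img: "p ` pauli_idx n = pauli_idx n"
    by (rule endo_inj_surj[OF finite_pauli_idx _ inj]) (use p in auto)
  have "char_l1 n (U * M * adj U) = (\<Sum>a\<in>pauli_idx n. cmod (mtrace (adj U * pauli n a * U * M)))"
    unfolding char_l1_def by (intro sum.cong refl) (simp add: mtrace_conj[OF Uc M pauli_carrier(1)])
  also have "\<dots> = (\<Sum>a\<in>pauli_idx n. cmod (mtrace (pauli n (p a) * M)))"
    by (intro sum.cong refl) (simp add: e mtrace_smult_mult[OF M pauli_carrier(1)] norm_mult phases_cmod c)
  also have "\<dots> = (\<Sum>b\<in>p ` pauli_idx n. cmod (mtrace (pauli n b * M)))"
    by (simp add: sum.reindex[OF inj])
  also have "\<dots> = char_l1 n M" unfolding img char_l1_def ..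
  finally show ?thesis .
qed

context orbit begin

lemma char_Orb: "P \<in> Orb \<Longrightarrow> char_l1 n P = char_l1 n \<rho>"
  unfolding O_iff using char_l1_conj rho_c by auto

end


lemma card_pauli_idx: "card (pauli_idx n) = 4^n"
proof -
  have "real (card (pauli_idx n)) = (\<Sum>a\<in>pauli_idx n. \<Prod>k<n. (\<lambda>(k::nat) (t::nat). 1::real) k (a!k))" by simp
  also have "\<dots> = (\<Prod>k<n. \<Sum>t<4. (\<lambda>(k::nat) (t::nat). 1::real) k t)" by (rule sum_pauli_idx_prod)
  also have "\<dots> = 4^n" by simp
  finally show ?thesis by (metis of_nat_eq_of_nat_power_cancel_iff of_nat_numeral)
qed

lemma zero_idx: "replicate n 0 \<in> pauli_idx n" unfolding pauli_idx_def by auto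

lemma trace_norm_pauli: assumes a: "a \<in> pauli_idx n" shows "trace_norm (pauli n a) = 2^n"
proof -
  let ?d = "(2::nat)^n"
  have "adj (pauli n a) * pauli n a = 1\<^sub>m ?d" using pauli_adj[OF a] pauli_sq[OF a] by simp
  then have cp: "char_poly (adj (pauli n a) * pauli n a) = [:-1,1:]^?d"
    using char_poly_upper_triangular[of "1\<^sub>m ?d :: complex mat" ?d] by (simp add: prod_list_replicate)
  have roots: "{x. poly ([:-1,1:]^?d) x = 0} = {1::complex}"
    by auto
  have ord: "order (1::complex) ([:-1,1:]^?d) = ?d" using order_power_n_n[of "1::complex" ?d] by simp
  show ?thesis unfolding trace_norm_def Let_def cp roots by (simp add: ord)
qed

context orbit begin

lemma S_zero: "S (pauli n (replicate n 0)) = card Orb"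
proof -
  have "S (pauli n (replicate n 0)) = (\<Sum>P\<in>Orb. 1)"
    unfolding S_def pauli_zero by (intro sum.cong refl) (simp add: O_tr right_mult_one_mat[OF O_c])
  then show ?thesis by simp
qed

lemma sum_S: "(\<Sum>a\<in>pauli_idx n. S (pauli n a)) = card Orb * char_l1 n \<rho>"
proof -
  have "(\<Sum>a\<in>pauli_idx n. S (pauli n a)) = (\<Sum>P\<in>Orb. \<Sum>a\<in>pauli_idx n. cmod (mtrace (P * pauli n a)))"
    unfolding S_def by (rule sum.swap)
  also have "\<dots> = (\<Sum>P\<in>Orb. char_l1 n P)"
    unfolding char_l1_def
    by (intro sum.cong refl) (simp add: mtrace_comm[OF O_c pauli_carrier(1)])
  also have "\<dots> = (\<Sum>P\<in>Orb. char_l1 n \<rho>)" by (intro sum.cong refl) (rule char_Orb)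
  finally show ?thesis by simp
qed

lemma S_main: assumes w: "w \<in> pauli_idx n" and w0: "w \<noteq> replicate n 0"
  shows "(4^n - 1) * S (pauli n w) = card Orb * (char_l1 n \<rho> - 1)"
proof -
  let ?R = "pauli_idx n - {replicate n 0}"
  have split: "(\<Sum>a\<in>pauli_idx n. S (pauli n a)) = S (pauli n (replicate n 0)) + (\<Sum>a\<in>?R. S (pauli n a))"
    using sum.remove[OF finite_pauli_idx zero_idx] by simp
  have "(\<Sum>a\<in>?R. S (pauli n a)) = (\<Sum>a\<in>?R. S (pauli n w))"
    by (intro sum.cong refl) (rule S_const[OF w _ w0], auto)
  also have "\<dots> = card ?R * S (pauli n w)" by simp
  also have "card ?R = 4^n - 1" using card_pauli_idx zero_idx finite_pauli_idx by (simp add: card_Diff_singleton)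
  finally have "(\<Sum>a\<in>?R. S (pauli n a)) = real (4^n - 1) * S (pauli n w)" .
  moreover have "(1::nat) \<le> 4^n" by simp
  ultimately show ?thesis using split sum_S S_zero by (simp add: of_nat_diff algebra_simps)
qed

lemma povm_S: assumes W: "W \<in> carrier_mat d d" shows "povm_l1 n z W = 2^n / card Orb * S W"
proof -
  have "povm_l1 n z W = (\<Sum>P\<in>Orb. 2^n / card Orb * cmod (mtrace (P * W)))"
    unfolding povm_l1_def Let_def
    by (intro sum.cong refl) (simp add: mtrace_smult_mult[OF W O_c] norm_mult norm_divide norm_power)
  then show ?thesis unfolding S_def by (simp add: sum_distrib_left)
qed

end


theorem theorem2:
  fixes n :: nat and z :: "complex vec" and W :: "complex mat"
  assumes "dim_vec z = 2 ^ n"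
    and "(\<Sum>i<2 ^ n. (cmod (z $ i))\<^sup>2) = 1"
    and "W \<in> pauli_ops n"
    and "W \<noteq> 1\<^sub>m (2 ^ n)"
  shows "povm_l1 n z W
    = (char_l1 n (proj z) - 1) / ((real (2 ^ n) + 1) * (real (2 ^ n) - 1)) * trace_norm W"
proof -
  interpret orbit n z using assms(1,2) by unfold_locales
  obtain w where w: "w \<in> pauli_idx n" and We: "W = pauli n w" using assms(3) unfolding pauli_ops_def by auto
  have w0: "w \<noteq> replicate n 0" using assms(4) We pauli_zero by auto
  have n0: "n \<noteq> 0"
  proof
    assume "n = 0"
    then have "w = replicate n 0" using w unfolding pauli_idx_def by auto
    then show False using w0 by simp
  qed
  have d4: "(4::real)^n = real (2^n) * real (2^n)"
    by (simp add: power_mult_distrib[symmetric])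
  have big: "(4::real)^n > 1" using n0 by (simp add: one_less_power)
  have N: "real (card Orb) > 0" using card_Orb_pos by simp
  have Sm: "(4^n - 1) * S W = card Orb * (char_l1 n \<rho> - 1)"
    using S_main[OF w w0] We by simp
  have Sm': "S W = card Orb * (char_l1 n \<rho> - 1) / ((4::real)^n - 1)"
  proof -
    have "real (4^n - 1 :: nat) = (4::real)^n - 1"
      by (simp add: of_nat_diff)
    then have "((4::real)^n - 1) * S W = card Orb * (char_l1 n \<rho> - 1)" using Sm by simp
    then show ?thesis using big by (simp add: field_simps)
  qed
  have "povm_l1 n z W = 2^n / card Orb * S W" using povm_S We by simp
  also have "\<dots> = 2^n * (char_l1 n \<rho> - 1) / ((4::real)^n - 1)" unfolding Sm' using N big by (simp add: field_simps)
  also have "(4::real)^n - 1 = (real (2 ^ n) + 1) * (real (2 ^ n) - 1)" unfolding d4 by (simp add: algebra_simps)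
  finally show ?thesis using trace_norm_pauli[OF w] We by simp
qed


end
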